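(* Let $E$ be a finite set with $|E|=n\ge1$, and consider the Boolean lattice of all subsets of $E$ with rank $\mathrm{rk}(F)=|F|$. Then, summing over chains of subsets that end at $E$, \[d_n(x)=\sum_{\varnothing=F_0\subsetneq F_1\subsetneq\cdots\subsetneq F_m=E}\ \prod_{i=1}^m\frac{x\bigl(1-x^{\mathrm{rk}(F_i)-\mathrm{rk}(F_{i-1})-1}\bigr)}{1-x},\] the sum over all $m\ge1$ and all such chains, and \[xA_n(x)=\sum_{F_0\subsetneq F_1\subsetneq\cdots\subsetneq F_m=E}\frac{x(1-x^{\mathrm{rk}(F_0)})}{1-x}\prod_{i=1}^m\frac{x\bigl(1-x^{\mathrm{rk}(F_i)-\mathrm{rk}(F_{i-1})-1}\bigr)}{1-x},\] the sum over all $m\ge0$ and all chains of subsets $F_0\subsetneq\cdots\subsetneq F_m=E$ (with $F_0$ arbitrary).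
   Context: Eulerian polynomials: $A_n(x)=\sum_{\sigma\in\mathfrak{S}_n}x^{\mathrm{des}(\sigma)}$ for $n\ge1$, with $\mathrm{des}(\sigma)=|\{i\in[n-1]:\sigma_i>\sigma_{i+1}\}|$. Derangement polynomials: $d_n(x)=\sum_{\sigma}x^{\mathrm{exc}(\sigma)}$ for $n\ge1$, the sum over fixed-point-free $\sigma\in\mathfrak{S}_n$, with $\mathrm{exc}(\sigma)=|\{i:\sigma_i>i\}|$. An empty product equals $1$. *)

theory Defs
  imports Complex_Main "HOL-Combinatorics.Permutations"
begin

definition des :: "nat \<Rightarrow> (nat \<Rightarrow> nat) \<Rightarrow> nat" where
  "des n \<sigma> = card {i \<in> {1..<n}. \<sigma> i > \<sigma> (Suc i)}"

definition exc :: "nat \<Rightarrow> (nat \<Rightarrow> nat) \<Rightarrow> nat" where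
  "exc n \<sigma> = card {i \<in> {1..n}. \<sigma> i > i}"

definition eulerian_poly :: "nat \<Rightarrow> real \<Rightarrow> real" where
  "eulerian_poly n x = (\<Sum>\<sigma> \<in> {\<sigma>. \<sigma> permutes {1..n}}. x ^ des n \<sigma>)"

definition derangement_poly :: "nat \<Rightarrow> real \<Rightarrow> real" where
  "derangement_poly n x =
     (\<Sum>\<sigma> \<in> {\<sigma>. \<sigma> permutes {1..n} \<and> (\<forall>i\<in>{1..n}. \<sigma> i \<noteq> i)}. x ^ exc n \<sigma>)"

definition chains_to :: "'a set \<Rightarrow> 'a set list set" where
  "chains_to E = {Fs. Fs \<noteq> [] \<and> sorted_wrt (\<subset>) Fs \<and> last Fs = E}"

definition chain_weight :: "real \<Rightarrow> 'a set list \<Rightarrow> real" where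
  "chain_weight x Fs =
     (\<Prod>i\<in>{1..length Fs - 1}.
        x * (1 - x ^ (card (Fs ! i) - card (Fs ! (i - 1)) - 1)) / (1 - x))"

end

theory Submission
  imports Defs "HOL-Computational_Algebra.Formal_Power_Series" "HOL-Combinatorics.Cycles"
begin

definition fw :: "real \<Rightarrow> nat \<Rightarrow> real" where
  "fw x k = x * (1 - x ^ (k - 1)) / (1 - x)"
definition gw :: "real \<Rightarrow> nat \<Rightarrow> real" where
  "gw x k = x * (1 - x ^ k) / (1 - x)"

definition Dn :: "real \<Rightarrow> real fps" where
  "Dn x = fps_exp x - fps_const x * fps_exp 1"
definition Iv :: "real \<Rightarrow> real fps" where
  "Iv x = inverse (Dn x)"
definition astar :: "real \<Rightarrow> real fps" where
  "astar x = fps_const (1 - x) * fps_exp 1 * Iv x"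
definition dstar :: "real \<Rightarrow> real fps" where
  "dstar x = fps_const (1 - x) * Iv x"
definition tstar :: "real \<Rightarrow> real fps" where
  "tstar x = fps_const x * (fps_exp 1 - fps_exp x) * Iv x"
definition Fps :: "real \<Rightarrow> real fps" where
  "Fps x = Abs_fps (\<lambda>k. if k = 0 then 0 else fw x k / fact k)"
definition Gps :: "real \<Rightarrow> real fps" where
  "Gps x = Abs_fps (\<lambda>k. gw x k / fact k)"

lemma Dn0: "fps_nth (Dn x) 0 = 1 - x"
  by (simp add: Dn_def)

lemma Iv_mult: assumes "x \<noteq> 1" shows "Iv x * Dn x = 1"
  unfolding Iv_def by (rule inverse_mult_eq_1) (use assms Dn0 in auto)

lemma Iv_deriv: assumes "x \<noteq> 1"
  shows "fps_deriv (Iv x) = - (fps_const x * fps_exp x - fps_const x * fps_exp 1) * (Iv x)^2"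
  unfolding Iv_def using assms Dn0[of x]
  by (subst fps_inverse_deriv) (auto simp: Dn_def)

lemma d0: "fps_deriv (1 - fps_const x) = (0::real fps)" by simp

lemma const_diff: "fps_const (a - b) = fps_const a - fps_const (b::real)"
  by simp
lemma const_mult: "fps_const (a * b) = fps_const a * fps_const (b::real)"
  by simp

lemma Fps_eq: assumes "x \<noteq> 1"
  shows "Fps x = fps_const (1/(1-x)) * (fps_const x * (fps_exp 1 - 1) - (fps_exp x - 1))"
proof (rule fps_ext)
  fix n
  show "fps_nth (Fps x) n = fps_nth (fps_const (1/(1-x)) * (fps_const x * (fps_exp 1 - 1) - (fps_exp x - 1))) n"
  proof (cases n)
    case 0 then show ?thesis by (simp add: Fps_def)
  next
    case (Suc k)
    have "1 - x \<noteq> 0" using assms by simp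
    then show ?thesis using Suc
      by (simp add: Fps_def fw_def diff_divide_distrib[symmetric] algebra_simps)
  qed
qed

lemma Gps_eq: assumes "x \<noteq> 1"
  shows "Gps x = fps_const (x/(1-x)) * (fps_exp 1 - fps_exp x)"
proof (rule fps_ext)
  fix n
  have "1 - x \<noteq> 0" using assms by simp
  then show "fps_nth (Gps x) n = fps_nth (fps_const (x/(1-x)) * (fps_exp 1 - fps_exp x)) n"
    by (simp add: Gps_def gw_def diff_divide_distrib[symmetric] algebra_simps)
qed

lemma inv_const: assumes "(x::real) \<noteq> 1" shows "fps_const (1/(1-x)) * (1 - fps_const x) = 1"
proof -
  have "1 - x \<noteq> 0" using assms by simp
  then have "fps_const (1/(1-x)) * fps_const (1 - x) = 1" by simp
  moreover have "fps_const (1 - x) = 1 - fps_const x" by (metis fps_const_1_eq_1 fps_const_sub)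
  ultimately show ?thesis by simp
qed

lemma dstar_rec: assumes "x \<noteq> 1" shows "dstar x = 1 + dstar x * Fps x"
proof -
  have h1: "Iv x * (fps_exp x - fps_const x * fps_exp 1) = 1" using Iv_mult[OF assms] by (simp add: Dn_def)
  note h2 = inv_const[OF assms]
  show ?thesis unfolding dstar_def Fps_eq[OF assms] const_diff fps_const_1_eq_1
    using h1 h2 by algebra
qed

lemma tstar_rec: assumes "x \<noteq> 1" shows "tstar x = Gps x + tstar x * Fps x"
proof -
  have h1: "Iv x * (fps_exp x - fps_const x * fps_exp 1) = 1" using Iv_mult[OF assms] by (simp add: Dn_def)
  note h2 = inv_const[OF assms]
  have h3: "fps_const (x/(1-x)) = fps_const x * fps_const (1/(1-x))" by simp
  show ?thesis unfolding tstar_def Fps_eq[OF assms] Gps_eq[OF assms] h3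
    using h1 h2 by algebra
qed

lemma tstar_astar: assumes "x \<noteq> 1" shows "tstar x = fps_const x * astar x - fps_const x"
proof -
  have h1: "Iv x * (fps_exp x - fps_const x * fps_exp 1) = 1" using Iv_mult[OF assms] by (simp add: Dn_def)
  show ?thesis unfolding tstar_def astar_def const_diff fps_const_1_eq_1
    using h1 by algebra
qed

lemma astar_deriv: assumes "x \<noteq> 1"
  shows "fps_deriv (astar x) = astar x * (fps_const (1 - x) + fps_const x * astar x)"
proof -
  have h1: "Iv x * (fps_exp x - fps_const x * fps_exp 1) = 1" using Iv_mult[OF assms] by (simp add: Dn_def)
  show ?thesis unfolding astar_def const_diff fps_const_1_eq_1
    using h1 Iv_deriv[OF assms]
    by (simp only: fps_deriv_mult fps_deriv_const fps_exp_deriv fps_const_1_eq_1 d0) algebra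
qed

lemma dstar_deriv: assumes "x \<noteq> 1"
  shows "fps_deriv (dstar x) = fps_const x * (astar x - 1) * dstar x"
proof -
  have h1: "Iv x * (fps_exp x - fps_const x * fps_exp 1) = 1" using Iv_mult[OF assms] by (simp add: Dn_def)
  show ?thesis unfolding astar_def dstar_def const_diff fps_const_1_eq_1
    using h1 Iv_deriv[OF assms]
    by (simp only: fps_deriv_mult fps_deriv_const fps_exp_deriv fps_const_1_eq_1 d0) algebra
qed

lemma astar0: assumes "x \<noteq> 1" shows "fps_nth (astar x) 0 = 1"
  using assms by (simp add: astar_def Iv_def Dn0)
lemma dstar0: assumes "x \<noteq> 1" shows "fps_nth (dstar x) 0 = 1"
  using assms by (simp add: dstar_def Iv_def Dn0)


fun desL :: "nat list \<Rightarrow> nat" where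
  "desL (a # b # l) = (if a > b then 1 else 0) + desL (b # l)"
| "desL _ = 0"

lemma desL_append: "desL (xs @ y # ys) = desL (xs @ [y]) + desL (y # ys)"
proof (induction xs)
  case Nil then show ?case by simp
next
  case (Cons a xs) then show ?case by (cases xs) auto
qed

lemma desL_snoc_max: "(\<forall>z\<in>set xs. z < y) \<Longrightarrow> desL (xs @ [y]) = desL xs"
proof (induction xs)
  case Nil then show ?case by simp
next
  case (Cons a xs) then show ?case by (cases xs) auto
qed

lemma desL_cons_max: "(\<forall>z\<in>set ys. z < y) \<Longrightarrow> desL (y # ys) = (if ys = [] then 0 else 1) + desL ys"
  by (cases ys) auto

lemma desL_split: "(\<forall>z\<in>set u \<union> set v. z < m) \<Longrightarrow>
   desL (u @ m # v) = desL u + (if v = [] then 0 else 1) + desL v"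
  using desL_append[of u m v] desL_snoc_max[of u m] desL_cons_max[of v m] by simp

definition lists_of :: "nat set \<Rightarrow> nat list set" where
  "lists_of S = {l. distinct l \<and> set l = S}"

lemma finite_lists_of: "finite S \<Longrightarrow> finite (lists_of S)"
  unfolding lists_of_def
  by (rule finite_subset[OF _ finite_subset_distinct[of S]]) auto

lemma lists_of_empty: "lists_of {} = {[]}"
  by (auto simp: lists_of_def)

lemma lists_split:
  assumes "finite S'" "m \<notin> S'"
  shows "bij_betw (\<lambda>(u,v). u @ m # v)
           (Sigma {u. distinct u \<and> set u \<subseteq> S'} (\<lambda>u. lists_of (S' - set u)))
           (lists_of (insert m S'))"
proof (rule bij_betw_imageI)
  show "inj_on (\<lambda>(u,v). u @ m # v) (Sigma {u. distinct u \<and> set u \<subseteq> S'} (\<lambda>u. lists_of (S' - set u)))"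
  proof (rule inj_onI)
    fix p q
    assume p: "p \<in> Sigma {u. distinct u \<and> set u \<subseteq> S'} (\<lambda>u. lists_of (S' - set u))"
      and eq: "(\<lambda>(u,v). u @ m # v) p = (\<lambda>(u,v). u @ m # v) q"
    obtain u v where uv: "p = (u,v)" by (cases p)
    obtain u' v' where uv': "q = (u',v')" by (cases q)
    have "m \<notin> set u" "m \<notin> set v" using p uv assms(2) by (auto simp: lists_of_def)
    then have "u = u' \<and> v = v'" using eq uv uv' append_Cons_eq_iff[of m u v u' v'] by simp
    then show "p = q" using uv uv' by simp
  qed
  show "(\<lambda>(u,v). u @ m # v) ` (Sigma {u. distinct u \<and> set u \<subseteq> S'} (\<lambda>u. lists_of (S' - set u))) =
        lists_of (insert m S')"
  proof
    show "(\<lambda>(u,v). u @ m # v) ` (Sigma {u. distinct u \<and> set u \<subseteq> S'} (\<lambda>u. lists_of (S' - set u))) \<subseteq>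
        lists_of (insert m S')"
      using assms(2) by (auto simp: lists_of_def)
  next
    show "lists_of (insert m S') \<subseteq> (\<lambda>(u,v). u @ m # v) ` (Sigma {u. distinct u \<and> set u \<subseteq> S'} (\<lambda>u. lists_of (S' - set u)))"
    proof
      fix l assume l: "l \<in> lists_of (insert m S')"
      then have "m \<in> set l" by (auto simp: lists_of_def)
      then obtain u v where uv: "l = u @ m # v" using split_list by metis
      have "(u, v) \<in> Sigma {u. distinct u \<and> set u \<subseteq> S'} (\<lambda>u. lists_of (S' - set u))"
        using l uv assms(2) by (auto simp: lists_of_def)
      then show "l \<in> (\<lambda>(u,v). u @ m # v) ` (Sigma {u. distinct u \<and> set u \<subseteq> S'} (\<lambda>u. lists_of (S' - set u)))"
        using uv by force
    qed
  qed
qed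

lemma sum_group_lists:
  assumes "finite S'"
  shows "(\<Sum>u\<in>{u. distinct u \<and> set u \<subseteq> S'}. h u) = (\<Sum>U\<in>Pow S'. \<Sum>u\<in>lists_of U. h u)"
proof -
  have "(\<Sum>U\<in>Pow S'. \<Sum>u\<in>{u \<in> {u. distinct u \<and> set u \<subseteq> S'}. set u = U}. h u) =
        (\<Sum>u\<in>{u. distinct u \<and> set u \<subseteq> S'}. h u)"
  proof (rule sum.group)
    show "finite {u. distinct u \<and> set u \<subseteq> S'}"
      using finite_subset_distinct[OF assms] by (simp add: conj_commute)
  qed (use assms in auto)
  moreover have "\<And>U. U \<in> Pow S' \<Longrightarrow> {u \<in> {u. distinct u \<and> set u \<subseteq> S'}. set u = U} = lists_of U"
    by (auto simp: lists_of_def)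
  ultimately show ?thesis by simp
qed

lemma conv_pow:
  assumes "finite S'"
  shows "(\<Sum>U\<in>Pow S'. F (card U) * G (card (S' - U))) =
         (\<Sum>k=0..card S'. of_nat (card S' choose k) * F k * (G (card S' - k) :: real))"
proof -
  let ?n = "card S'"
  have "(\<Sum>U\<in>Pow S'. F (card U) * G (card (S' - U))) =
        (\<Sum>k\<in>{0..?n}. \<Sum>U\<in>{U \<in> Pow S'. card U = k}. F (card U) * G (card (S' - U)))"
    by (rule sum.group[symmetric]) (use assms in \<open>auto intro: card_mono\<close>)
  also have "\<dots> = (\<Sum>k\<in>{0..?n}. of_nat (?n choose k) * F k * G (?n - k))"
  proof (rule sum.cong[OF refl])
    fix k assume "k \<in> {0..?n}"
    have "(\<Sum>U\<in>{U \<in> Pow S'. card U = k}. F (card U) * G (card (S' - U))) =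
          (\<Sum>U\<in>{U \<in> Pow S'. card U = k}. F k * G (?n - k))"
      by (rule sum.cong) (use assms in \<open>auto simp: card_Diff_subset finite_subset\<close>)
    also have "\<dots> = of_nat (card {U \<in> Pow S'. card U = k}) * (F k * G (?n - k))" by simp
    also have "{U \<in> Pow S'. card U = k} = {B. B \<subseteq> S' \<and> card B = k}" by auto
    also have "card \<dots> = ?n choose k" by (rule n_subsets[OF assms])
    finally show "(\<Sum>U\<in>{U \<in> Pow S'. card U = k}. F (card U) * G (card (S' - U))) =
          of_nat (?n choose k) * F k * G (?n - k)" by simp
  qed
  finally show ?thesis .
qed

lemma conv_fact:
  "(\<Sum>k=0..n. of_nat (n choose k) * (fact k * a k) * (fact (n - k) * b (n - k) :: real)) =
   fact n * (\<Sum>k=0..n. a k * b (n - k))"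
proof -
  have "(\<Sum>k=0..n. of_nat (n choose k) * (fact k * a k) * (fact (n - k) * b (n - k) :: real)) =
        (\<Sum>k=0..n. fact n * (a k * b (n - k)))"
  proof (rule sum.cong[OF refl])
    fix k assume "k \<in> {0..n}"
    then have "k \<le> n" by simp
    then show "of_nat (n choose k) * (fact k * a k) * (fact (n - k) * b (n - k) :: real) =
          fact n * (a k * b (n - k))"
      by (simp add: binomial_fact field_simps)
  qed
  then show ?thesis by (simp add: sum_distrib_left)
qed

definition AP :: "real \<Rightarrow> nat set \<Rightarrow> real" where
  "AP x S = (\<Sum>l\<in>lists_of S. x ^ desL l)"

lemma AP_empty: "AP x {} = 1"
  by (simp add: AP_def lists_of_empty)

lemma AP_formula:
  assumes "finite S" "x \<noteq> 1"
  shows "AP x S = fact (card S) * fps_nth (astar x) (card S)"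
  using assms(1)
proof (induction "card S" arbitrary: S rule: less_induct)
  case less
  show ?case
  proof (cases "S = {}")
    case True then show ?thesis using astar0[OF assms(2)] by (simp add: AP_empty)
  next
    case False
    define m where "m = Max S"
    define S' where "S' = S - {m}"
    have mS: "m \<in> S" using False less.prems m_def by simp
    have SS: "S = insert m S'" "m \<notin> S'" using mS S'_def by auto
    have fS': "finite S'" using less.prems S'_def by simp
    have lt: "\<forall>z\<in>S'. z < m"
    proof
      fix z assume "z \<in> S'"
      then have "z \<in> S" "z \<noteq> m" using S'_def by auto
      moreover have "z \<le> m" using \<open>z \<in> S\<close> less.prems m_def by simp
      ultimately show "z < m" by simp
    qed
    define n where "n = card S'"
    have cS: "card S = Suc n" using SS fS' n_def by simp
    define bb where "bb = (\<lambda>R. if R = {} then 1 else x * AP x R)"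
    have inner: "(\<Sum>v\<in>lists_of R. (if v = [] then 1 else x * x ^ desL v)) = bb R" if "finite R" for R
    proof (cases "R = {}")
      case True then show ?thesis by (simp add: bb_def lists_of_empty)
    next
      case False
      have "\<And>v. v \<in> lists_of R \<Longrightarrow> v \<noteq> []" using False by (auto simp: lists_of_def)
      then have "(\<Sum>v\<in>lists_of R. (if v = [] then 1 else x * x ^ desL v)) = (\<Sum>v\<in>lists_of R. x * x ^ desL v)"
        by (intro sum.cong) auto
      then show ?thesis using False by (simp add: bb_def AP_def sum_distrib_left)
    qed
    have "AP x S = (\<Sum>l\<in>lists_of (insert m S'). x ^ desL l)" using SS by (simp add: AP_def)
    also have "\<dots> = (\<Sum>(u,v)\<in>Sigma {u. distinct u \<and> set u \<subseteq> S'} (\<lambda>u. lists_of (S' - set u)). x ^ desL (u @ m # v))"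
    proof -
      have "(\<Sum>l\<in>lists_of (insert m S'). x ^ desL l) =
            (\<Sum>p\<in>Sigma {u. distinct u \<and> set u \<subseteq> S'} (\<lambda>u. lists_of (S' - set u)). x ^ desL ((\<lambda>(u,v). u @ m # v) p))"
        by (rule sum.reindex_bij_betw[OF lists_split[OF fS' SS(2)], symmetric])
      also have "\<dots> = (\<Sum>(u,v)\<in>Sigma {u. distinct u \<and> set u \<subseteq> S'} (\<lambda>u. lists_of (S' - set u)). x ^ desL (u @ m # v))"
        by (rule sum.cong) auto
      finally show ?thesis .
    qed
    also have "\<dots> = (\<Sum>u\<in>{u. distinct u \<and> set u \<subseteq> S'}. \<Sum>v\<in>lists_of (S' - set u). x ^ desL (u @ m # v))"
    proof -
      have fL: "finite {u. distinct u \<and> set u \<subseteq> S'}"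
        using finite_subset_distinct[OF fS'] by (simp add: conj_commute)
      show ?thesis
        by (rule sum.Sigma[OF fL, symmetric]) (use fS' in \<open>auto intro: finite_lists_of\<close>)
    qed
    also have "\<dots> = (\<Sum>u\<in>{u. distinct u \<and> set u \<subseteq> S'}. x ^ desL u * bb (S' - set u))"
    proof (rule sum.cong[OF refl])
      fix u assume u: "u \<in> {u. distinct u \<and> set u \<subseteq> S'}"
      have "(\<Sum>v\<in>lists_of (S' - set u). x ^ desL (u @ m # v)) =
            (\<Sum>v\<in>lists_of (S' - set u). x ^ desL u * (if v = [] then 1 else x * x ^ desL v))"
      proof (rule sum.cong[OF refl])
        fix v assume "v \<in> lists_of (S' - set u)"
        then have "\<forall>z\<in>set u \<union> set v. z < m" using u lt by (auto simp: lists_of_def)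
        then show "x ^ desL (u @ m # v) = x ^ desL u * (if v = [] then 1 else x * x ^ desL v)"
          by (simp add: desL_split power_add)
      qed
      also have "\<dots> = x ^ desL u * bb (S' - set u)"
        unfolding sum_distrib_left[symmetric] using inner[of "S' - set u"] fS' by simp
      finally show "(\<Sum>v\<in>lists_of (S' - set u). x ^ desL (u @ m # v)) = x ^ desL u * bb (S' - set u)" .
    qed
    also have "\<dots> = (\<Sum>U\<in>Pow S'. \<Sum>u\<in>lists_of U. x ^ desL u * bb (S' - set u))"
      by (rule sum_group_lists[OF fS'])
    also have "\<dots> = (\<Sum>U\<in>Pow S'. AP x U * bb (S' - U))"
    proof (rule sum.cong[OF refl])
      fix U assume "U \<in> Pow S'"
      have "(\<Sum>u\<in>lists_of U. x ^ desL u * bb (S' - set u)) = (\<Sum>u\<in>lists_of U. x ^ desL u * bb (S' - U))"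
        by (rule sum.cong) (auto simp: lists_of_def)
      then show "(\<Sum>u\<in>lists_of U. x ^ desL u * bb (S' - set u)) = AP x U * bb (S' - U)"
        by (simp add: AP_def sum_distrib_right)
    qed
    also have "\<dots> = (\<Sum>U\<in>Pow S'. (fact (card U) * fps_nth (astar x) (card U)) *
          (fact (card (S' - U)) * fps_nth (fps_const (1 - x) + fps_const x * astar x) (card (S' - U))))"
    proof (rule sum.cong[OF refl])
      fix U assume U: "U \<in> Pow S'"
      then have fU: "finite U" using fS' finite_subset by auto
      have "card U \<le> card S'" using U fS' by (simp add: card_mono)
      then have cU: "card U < card S" using cS n_def by simp
      have fR: "finite (S' - U)" using fS' by simp
      have "card (S' - U) \<le> card S'" using fS' by (simp add: card_mono)
      then have cR: "card (S' - U) < card S" using cS n_def by simp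
      have "AP x U = fact (card U) * fps_nth (astar x) (card U)" using less.hyps cU fU by blast
      moreover have "bb (S' - U) = fact (card (S' - U)) * fps_nth (fps_const (1 - x) + fps_const x * astar x) (card (S' - U))"
      proof (cases "S' - U = {}")
        case True then show ?thesis unfolding True bb_def using astar0[OF assms(2)] by simp
      next
        case False
        then have "card (S' - U) \<noteq> 0" using fR by simp
        then show ?thesis using False less.hyps[OF cR fR] by (simp add: bb_def)
      qed
      ultimately show "AP x U * bb (S' - U) = (fact (card U) * fps_nth (astar x) (card U)) *
          (fact (card (S' - U)) * fps_nth (fps_const (1 - x) + fps_const x * astar x) (card (S' - U)))"
        by simp
    qed
    also have "\<dots> = (\<Sum>k=0..n. of_nat (n choose k) * (fact k * fps_nth (astar x) k) *
          (fact (n - k) * fps_nth (fps_const (1 - x) + fps_const x * astar x) (n - k)))"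
      unfolding n_def by (rule conv_pow[OF fS'])
    also have "\<dots> = fact n * (\<Sum>k=0..n. fps_nth (astar x) k * fps_nth (fps_const (1 - x) + fps_const x * astar x) (n - k))"
      by (rule conv_fact)
    also have "\<dots> = fact n * fps_nth (astar x * (fps_const (1 - x) + fps_const x * astar x)) n"
      by (simp only: fps_mult_nth)
    also have "\<dots> = fact n * fps_nth (fps_deriv (astar x)) n"
      by (simp only: astar_deriv[OF assms(2)])
    also have "\<dots> = fact n * (of_nat (n + 1) * fps_nth (astar x) (n + 1))"
      by (simp only: fps_deriv_nth)
    also have "\<dots> = fact (card S) * fps_nth (astar x) (card S)"
      unfolding cS fact_Suc by simp
    finally show ?thesis .
  qed
qed


lemma card_nat_split:
  assumes "finite {k. P (Suc k)}"
  shows "card {k::nat. P k} = (if P 0 then 1 else 0) + card {k. P (Suc k)}"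
proof -
  have eq: "{k::nat. P k} = {k. k = 0 \<and> P 0} \<union> Suc ` {k. P (Suc k)}"
  proof (rule set_eqI)
    fix k show "k \<in> {k::nat. P k} \<longleftrightarrow> k \<in> {k. k = 0 \<and> P 0} \<union> Suc ` {k. P (Suc k)}"
      by (cases k) auto
  qed
  have "card ({k::nat. k = 0 \<and> P 0} \<union> Suc ` {k. P (Suc k)}) =
        card {k::nat. k = 0 \<and> P 0} + card (Suc ` {k. P (Suc k)})"
    by (rule card_Un_disjoint) (use assms in auto)
  moreover have "card (Suc ` {k. P (Suc k)}) = card {k. P (Suc k)}"
    by (rule card_image) simp
  moreover have "card {k::nat. k = 0 \<and> P 0} = (if P 0 then 1 else 0)" by auto
  ultimately show ?thesis using eq by simp
qed

lemma desL_card: "desL l = card {k. Suc k < length l \<and> l ! Suc k < l ! k}"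
proof (induction l rule: desL.induct)
  case (1 a b l)
  have "card {k. Suc k < length (a # b # l) \<and> (a # b # l) ! Suc k < (a # b # l) ! k} =
        (if b < a then 1 else 0) + card {k. Suc k < length (b # l) \<and> (b # l) ! Suc k < (b # l) ! k}"
    by (subst card_nat_split) (auto intro: finite_subset[of _ "{..<length l}"])
  then show ?case using 1 by simp
next
  case ("2_1") then show ?case by simp
next
  case ("2_2" v) then show ?case by simp
qed

definition Perms :: "nat \<Rightarrow> (nat \<Rightarrow> nat) set" where
  "Perms n = {\<sigma>. \<sigma> permutes {1..n}}"

lemma perm_list_bij:
  "bij_betw (\<lambda>\<sigma>. map \<sigma> [1..<Suc n]) (Perms n) (lists_of {1..n})"
proof (rule bij_betw_imageI)
  show "inj_on (\<lambda>\<sigma>. map \<sigma> [1..<Suc n]) (Perms n)"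
  proof (rule inj_onI)
    fix \<sigma> \<tau> assume s: "\<sigma> \<in> Perms n" and t: "\<tau> \<in> Perms n"
      and eq: "map \<sigma> [1..<Suc n] = map \<tau> [1..<Suc n]"
    show "\<sigma> = \<tau>"
    proof
      fix i
      show "\<sigma> i = \<tau> i"
      proof (cases "i \<in> {1..n}")
        case True
        then have "i \<in> set [1..<Suc n]" by auto
        then show ?thesis using eq by (metis map_eq_conv)
      next
        case False
        then show ?thesis using s t by (simp add: Perms_def permutes_not_in)
      qed
    qed
  qed
  show "(\<lambda>\<sigma>. map \<sigma> [1..<Suc n]) ` Perms n = lists_of {1..n}"
  proof
    show "(\<lambda>\<sigma>. map \<sigma> [1..<Suc n]) ` Perms n \<subseteq> lists_of {1..n}"
    proof
      fix l assume "l \<in> (\<lambda>\<sigma>. map \<sigma> [1..<Suc n]) ` Perms n"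
      then obtain \<sigma> where s: "\<sigma> permutes {1..n}" and l: "l = map \<sigma> [1..<Suc n]"
        by (auto simp: Perms_def)
      have "inj_on \<sigma> (set [1..<Suc n])" using permutes_inj[OF s] by (metis inj_on_subset subset_UNIV)
      then have "distinct l" using l by (simp add: distinct_map)
      moreover have "set l = {1..n}"
      proof -
        have "set [1..<Suc n] = {1..n}" by (auto simp del: upt_Suc)
        then show ?thesis using l permutes_image[OF s] by (simp del: upt_Suc)
      qed
      ultimately show "l \<in> lists_of {1..n}" by (simp add: lists_of_def)
    qed
  next
    show "lists_of {1..n} \<subseteq> (\<lambda>\<sigma>. map \<sigma> [1..<Suc n]) ` Perms n"
    proof
      fix l assume "l \<in> lists_of {1..n}"
      then have dl: "distinct l" and sl: "set l = {1..n}" by (auto simp: lists_of_def)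
      have len: "length l = n" using distinct_card[OF dl] sl by simp
      define \<sigma> where "\<sigma> = (\<lambda>i. if i \<in> {1..n} then l ! (i - 1) else i)"
      have "bij_betw \<sigma> {1..n} {1..n}"
      proof (rule bij_betw_imageI)
        show "inj_on \<sigma> {1..n}"
        proof (rule inj_onI)
          fix i j assume "i \<in> {1..n}" "j \<in> {1..n}" "\<sigma> i = \<sigma> j"
          then have "l ! (i - 1) = l ! (j - 1)" "i - 1 < length l" "j - 1 < length l"
            using len by (auto simp: \<sigma>_def)
          then have "i - 1 = j - 1" using dl nth_eq_iff_index_eq by blast
          then show "i = j" using \<open>i \<in> {1..n}\<close> \<open>j \<in> {1..n}\<close> by auto
        qed
        show "\<sigma> ` {1..n} = {1..n}"
        proof
          show "\<sigma> ` {1..n} \<subseteq> {1..n}"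
          proof
            fix y assume "y \<in> \<sigma> ` {1..n}"
            then obtain i where "i \<in> {1..n}" "y = l ! (i - 1)" by (auto simp: \<sigma>_def)
            then have "y \<in> set l" using len by auto
            then show "y \<in> {1..n}" using sl by simp
          qed
        next
          show "{1..n} \<subseteq> \<sigma> ` {1..n}"
          proof
            fix y assume "y \<in> {1..n}"
            then have "y \<in> set l" using sl by simp
            then obtain k where k: "k < length l" "l ! k = y" by (auto simp: in_set_conv_nth)
            then have "Suc k \<in> {1..n}" "\<sigma> (Suc k) = y" using len by (auto simp: \<sigma>_def)
            then show "y \<in> \<sigma> ` {1..n}" by (metis image_eqI)
          qed
        qed
      qed
      moreover have "\<And>i. i \<notin> {1..n} \<Longrightarrow> \<sigma> i = i" by (auto simp: \<sigma>_def)
      ultimately have "\<sigma> permutes {1..n}" by (rule bij_imp_permutes)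
      moreover have "map \<sigma> [1..<Suc n] = l"
        by (rule nth_equalityI) (use len in \<open>auto simp: \<sigma>_def simp del: upt_Suc\<close>)
      ultimately show "l \<in> (\<lambda>\<sigma>. map \<sigma> [1..<Suc n]) ` Perms n"
        by (auto simp: Perms_def)
    qed
  qed
qed

lemma des_desL:
  "des n \<sigma> = desL (map \<sigma> [1..<Suc n])"
proof -
  have "desL (map \<sigma> [1..<Suc n]) = card {k. Suc k < n \<and> \<sigma> (Suc (Suc k)) < \<sigma> (Suc k)}"
    unfolding desL_card by (rule arg_cong[where f = card]) (auto simp del: upt_Suc)
  also have "\<dots> = card (Suc ` {k. Suc k < n \<and> \<sigma> (Suc (Suc k)) < \<sigma> (Suc k)})"
    by (rule card_image[symmetric]) simp
  also have "Suc ` {k. Suc k < n \<and> \<sigma> (Suc (Suc k)) < \<sigma> (Suc k)} = {i \<in> {1..<n}. \<sigma> i > \<sigma> (Suc i)}"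
  proof
    show "Suc ` {k. Suc k < n \<and> \<sigma> (Suc (Suc k)) < \<sigma> (Suc k)} \<subseteq> {i \<in> {1..<n}. \<sigma> i > \<sigma> (Suc i)}"
      by auto
    show "{i \<in> {1..<n}. \<sigma> i > \<sigma> (Suc i)} \<subseteq> Suc ` {k. Suc k < n \<and> \<sigma> (Suc (Suc k)) < \<sigma> (Suc k)}"
    proof
      fix i assume "i \<in> {i \<in> {1..<n}. \<sigma> i > \<sigma> (Suc i)}"
      then have "i = Suc (i - 1)" "Suc (i - 1) < n" "\<sigma> (Suc (Suc (i - 1))) < \<sigma> (Suc (i - 1))" by auto
      then show "i \<in> Suc ` {k. Suc k < n \<and> \<sigma> (Suc (Suc k)) < \<sigma> (Suc k)}" by blast
    qed
  qed
  finally show ?thesis by (simp add: des_def)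
qed

lemma eulerian_AP: "eulerian_poly n x = AP x {1..n}"
proof -
  have "eulerian_poly n x = (\<Sum>\<sigma>\<in>Perms n. x ^ desL (map \<sigma> [1..<Suc n]))"
    by (simp add: eulerian_poly_def Perms_def des_desL)
  also have "\<dots> = (\<Sum>l\<in>lists_of {1..n}. x ^ desL l)"
    by (rule sum.reindex_bij_betw[OF perm_list_bij])
  finally show ?thesis by (simp add: AP_def)
qed


fun ascL :: "nat list \<Rightarrow> nat" where
  "ascL (a # b # l) = (if a < b then 1 else 0) + ascL (b # l)"
| "ascL _ = 0"

lemma ascL_append: "ascL (xs @ y # ys) = ascL (xs @ [y]) + ascL (y # ys)"
proof (induction xs)
  case Nil then show ?case by simp
next
  case (Cons a xs) then show ?case by (cases xs) auto
qed

lemma ascL_rev: "ascL (rev l) = desL l"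
proof (induction l rule: desL.induct)
  case (1 a b l)
  have "ascL (rev (a # b # l)) = ascL (rev l @ b # [a])" by simp
  also have "\<dots> = ascL (rev l @ [b]) + ascL [b, a]" by (rule ascL_append)
  also have "\<dots> = desL (b # l) + (if b < a then 1 else 0)" using 1 by simp
  finally show ?case by simp
next
  case "2_1" then show ?case by simp
next
  case ("2_2" v) then show ?case by simp
qed

lemma cyc_count:
  "(\<forall>z\<in>set l. z < m) \<Longrightarrow>
   card {k. k < length l \<and> l ! k < (l @ [m]) ! Suc k} = (if l = [] then 0 else Suc (ascL l))"
proof (induction l)
  case Nil then show ?case by simp
next
  case (Cons a l)
  have fin: "finite {k. Suc k < length (a # l) \<and> (a # l) ! Suc k < ((a # l) @ [m]) ! Suc (Suc k)}"
    by (rule finite_subset[of _ "{..<length l}"]) auto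
  have "card {k. k < length (a # l) \<and> (a # l) ! k < ((a # l) @ [m]) ! Suc k} =
        (if 0 < length (a # l) \<and> (a # l) ! 0 < ((a # l) @ [m]) ! Suc 0 then 1 else 0) +
        card {k. Suc k < length (a # l) \<and> (a # l) ! Suc k < ((a # l) @ [m]) ! Suc (Suc k)}"
    by (rule card_nat_split[OF fin])
  also have "{k. Suc k < length (a # l) \<and> (a # l) ! Suc k < ((a # l) @ [m]) ! Suc (Suc k)} =
             {k. k < length l \<and> l ! k < (l @ [m]) ! Suc k}" by simp
  also have "card \<dots> = (if l = [] then 0 else Suc (ascL l))" using Cons by simp
  finally show ?case using Cons.prems by (cases l) auto
qed

definition Der :: "nat set \<Rightarrow> (nat \<Rightarrow> nat) set" where
  "Der S = {\<sigma>. \<sigma> permutes S \<and> (\<forall>i\<in>S. \<sigma> i \<noteq> i)}"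

definition excS :: "nat set \<Rightarrow> (nat \<Rightarrow> nat) \<Rightarrow> nat" where
  "excS S \<sigma> = card {i \<in> S. \<sigma> i > i}"

definition DP :: "real \<Rightarrow> nat set \<Rightarrow> real" where
  "DP x S = (\<Sum>\<sigma>\<in>Der S. x ^ excS S \<sigma>)"

lemma finite_Der: "finite S \<Longrightarrow> finite (Der S)"
  unfolding Der_def by (rule finite_subset[OF _ finite_permutations]) auto

lemma cyc_nth:
  assumes "distinct (m # l)" "i < Suc (length l)"
  shows "cycle_of_list (m # l) ((m # l) ! i) = (l @ [m]) ! i"
proof -
  have "map (cycle_of_list (m # l) ^^ 1) (m # l) = rotate 1 (m # l)"
    by (rule cyclic_rotation[OF assms(1)])
  then have "map (cycle_of_list (m # l)) (m # l) = l @ [m]" by simp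
  then have "(map (cycle_of_list (m # l)) (m # l)) ! i = (l @ [m]) ! i" by simp
  then show ?thesis using assms(2) by (simp del: list.map nth_Cons_Suc)
qed

locale dsetup =
  fixes S :: "nat set" and m :: nat
  assumes fS: "finite S" and mS: "m \<in> S" and mx: "\<forall>z\<in>S. z \<le> m"
begin

definition "S' = S - {m}"
definition "Dom = Sigma {l. l \<noteq> [] \<and> distinct l \<and> set l \<subseteq> S'} (\<lambda>l. Der (S' - set l))"
definition "Phi = (\<lambda>(l, \<tau>). cycle_of_list (m # l) \<circ> \<tau>)"

lemma S'_lt: "z \<in> S' \<Longrightarrow> z < m"
  using mx unfolding S'_def by (metis DiffE insertCI le_neq_implies_less)

lemma phi_props:
  assumes lt: "(l, \<tau>) \<in> Dom"
  shows "Phi (l, \<tau>) \<in> Der S"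
    and "\<And>i. i < Suc (length l) \<Longrightarrow> Phi (l, \<tau>) ((m # l) ! i) = (l @ [m]) ! i"
    and "\<And>j. j \<in> S' - set l \<Longrightarrow> Phi (l, \<tau>) j = \<tau> j"
    and "excS S (Phi (l, \<tau>)) = Suc (ascL l + excS (S' - set l) \<tau>)"
proof -
  define R where "R = S' - set l"
  define c where "c = cycle_of_list (m # l)"
  have l: "l \<noteq> []" "distinct l" "set l \<subseteq> S'" and t: "\<tau> permutes R" "\<forall>i\<in>R. \<tau> i \<noteq> i"
    using lt by (auto simp: Dom_def Der_def R_def)
  have mS': "m \<notin> S'" by (simp add: S'_def)
  have dml: "distinct (m # l)" using l mS' by auto
  have sml: "set (m # l) \<subseteq> S" using l mS by (auto simp: S'_def)
  have RS: "R \<subseteq> S" by (auto simp: R_def S'_def)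
  have Sdec: "S = set (m # l) \<union> R" using l mS by (auto simp: R_def S'_def)
  have disj: "set (m # l) \<inter> R = {}" using mS' by (auto simp: R_def)
  have cp: "c permutes set (m # l)" unfolding c_def by (rule cycle_permutes)
  have P: "Phi (l, \<tau>) = c \<circ> \<tau>" by (simp add: Phi_def c_def)
  have onR: "Phi (l, \<tau>) j = \<tau> j" if "j \<in> R" for j
  proof -
    have "\<tau> j \<in> R" using permutes_in_image[OF t(1)] that by simp
    then have "\<tau> j \<notin> set (m # l)" using disj by auto
    then show ?thesis using P by (simp add: c_def id_outside_supp)
  qed
  have onC: "Phi (l, \<tau>) ((m # l) ! i) = (l @ [m]) ! i" if "i < Suc (length l)" for i
  proof -
    have "(m # l) ! i \<in> set (m # l)" using that by (simp del: nth_Cons_Suc list.set add: nth_mem)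
    then have "(m # l) ! i \<notin> R" using disj by auto
    then have "\<tau> ((m # l) ! i) = (m # l) ! i" using permutes_not_in[OF t(1)] by simp
    then show ?thesis using P cyc_nth[OF dml that] by (simp add: c_def)
  qed
  show "\<And>i. i < Suc (length l) \<Longrightarrow> Phi (l, \<tau>) ((m # l) ! i) = (l @ [m]) ! i" by (rule onC)
  show "\<And>j. j \<in> S' - set l \<Longrightarrow> Phi (l, \<tau>) j = \<tau> j" using onR by (simp add: R_def)
  have ne: "(l @ [m]) ! i \<noteq> (m # l) ! i" if "i < Suc (length l)" for i
  proof (cases i)
    case 0
    then show ?thesis using l(1) dml by (cases l) auto
  next
    case (Suc k)
    then have k: "k < length l" using that by simp
    show ?thesis
    proof (cases "Suc k < length l")
      case True
      then have "l ! Suc k \<noteq> l ! k" using l(2) k nth_eq_iff_index_eq by fastforce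
      then show ?thesis using Suc True by (simp add: nth_append)
    next
      case False
      then have "(l @ [m]) ! Suc k = m" using k by (simp add: nth_append)
      moreover have "l ! k \<noteq> m" using k dml nth_mem by fastforce
      ultimately show ?thesis using Suc by simp
    qed
  qed
  have permS: "Phi (l, \<tau>) permutes S"
    unfolding P by (rule permutes_compose[OF permutes_subset[OF t(1) RS] permutes_subset[OF cp sml]])
  have nofix: "\<forall>i\<in>S. Phi (l, \<tau>) i \<noteq> i"
  proof
    fix j assume "j \<in> S"
    then consider "j \<in> R" | "j \<in> set (m # l)" using Sdec by blast
    then show "Phi (l, \<tau>) j \<noteq> j"
    proof cases
      case 1 then show ?thesis using onR t(2) by simp
    next
      case 2
      then obtain i where i: "i < Suc (length l)" "j = (m # l) ! i"
        by (metis in_set_conv_nth length_Cons)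
      then show ?thesis using onC ne by simp
    qed
  qed
  show "Phi (l, \<tau>) \<in> Der S" using permS nofix by (simp add: Der_def)
  have lm: "\<forall>z\<in>set l. z < m" using l(3) S'_lt by auto
  have "{i \<in> S. Phi (l, \<tau>) i > i} = {j \<in> set (m # l). Phi (l, \<tau>) j > j} \<union> {j \<in> R. \<tau> j > j}"
    using Sdec onR by auto
  then have "excS S (Phi (l, \<tau>)) = card {j \<in> set (m # l). Phi (l, \<tau>) j > j} + card {j \<in> R. \<tau> j > j}"
    unfolding excS_def using disj fS Sdec by (subst card_Un_disjoint[symmetric]) auto
  moreover have "{j \<in> set (m # l). Phi (l, \<tau>) j > j} = (!) (m # l) ` {i. i < Suc (length l) \<and> (m # l) ! i < (l @ [m]) ! i}"
  proof
    show "{j \<in> set (m # l). Phi (l, \<tau>) j > j} \<subseteq> (!) (m # l) ` {i. i < Suc (length l) \<and> (m # l) ! i < (l @ [m]) ! i}"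
    proof
      fix j assume "j \<in> {j \<in> set (m # l). Phi (l, \<tau>) j > j}"
      then obtain i where i: "i < Suc (length l)" "j = (m # l) ! i" "Phi (l, \<tau>) j > j"
        by (metis (no_types, lifting) in_set_conv_nth length_Cons mem_Collect_eq)
      then show "j \<in> (!) (m # l) ` {i. i < Suc (length l) \<and> (m # l) ! i < (l @ [m]) ! i}"
        using onC[OF i(1)] by auto
    qed
    show "(!) (m # l) ` {i. i < Suc (length l) \<and> (m # l) ! i < (l @ [m]) ! i} \<subseteq> {j \<in> set (m # l). Phi (l, \<tau>) j > j}"
    proof
      fix j assume "j \<in> (!) (m # l) ` {i. i < Suc (length l) \<and> (m # l) ! i < (l @ [m]) ! i}"
      then obtain i where i: "i < Suc (length l)" "(m # l) ! i < (l @ [m]) ! i" "j = (m # l) ! i" by auto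
      have "j \<in> set (m # l)" using i by (simp del: nth_Cons_Suc list.set add: nth_mem)
      then show "j \<in> {j \<in> set (m # l). Phi (l, \<tau>) j > j}" using onC[OF i(1)] i by simp
    qed
  qed
  moreover have "card ((!) (m # l) ` {i. i < Suc (length l) \<and> (m # l) ! i < (l @ [m]) ! i}) =
                 card {i. i < Suc (length l) \<and> (m # l) ! i < (l @ [m]) ! i}"
    by (rule card_image, rule inj_on_nth[OF dml]) auto
  moreover have "card {i. i < Suc (length l) \<and> (m # l) ! i < (l @ [m]) ! i} = Suc (ascL l)"
  proof -
    have fin: "finite {k. Suc k < Suc (length l) \<and> (m # l) ! Suc k < (l @ [m]) ! Suc k}"
      by (rule finite_subset[of _ "{..<length l}"]) auto
    have "m < (l @ [m]) ! 0 \<longleftrightarrow> False" using l(1) lm by (cases l) auto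
    then have "card {i. i < Suc (length l) \<and> (m # l) ! i < (l @ [m]) ! i} =
               card {k. Suc k < Suc (length l) \<and> (m # l) ! Suc k < (l @ [m]) ! Suc k}"
      by (subst card_nat_split[OF fin]) simp
    also have "\<dots> = card {k. k < length l \<and> l ! k < (l @ [m]) ! Suc k}" by simp
    also have "\<dots> = Suc (ascL l)" using cyc_count[OF lm] l(1) by simp
    finally show ?thesis .
  qed
  ultimately show "excS S (Phi (l, \<tau>)) = Suc (ascL l + excS (S' - set l) \<tau>)"
    by (simp add: excS_def R_def)
qed


lemma phi_iter:
  assumes "(l, \<tau>) \<in> Dom"
  shows "i \<le> length l \<Longrightarrow> (Phi (l, \<tau>) ^^ i) m = (m # l) ! i"
proof (induction i)
  case 0 then show ?case by simp
next
  case (Suc i)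
  then have "i < Suc (length l)" by simp
  then have "Phi (l, \<tau>) ((m # l) ! i) = (l @ [m]) ! i" by (rule phi_props(2)[OF assms])
  moreover have "(l @ [m]) ! i = (m # l) ! Suc i" using Suc.prems by (simp add: nth_append)
  ultimately show ?case using Suc by simp
qed

lemma phi_ret:
  assumes "(l, \<tau>) \<in> Dom"
  shows "(Phi (l, \<tau>) ^^ Suc (length l)) m = m"
proof -
  have "(Phi (l, \<tau>) ^^ Suc (length l)) m = Phi (l, \<tau>) ((m # l) ! length l)"
    using phi_iter[OF assms, of "length l"] by simp
  also have "\<dots> = (l @ [m]) ! length l" by (rule phi_props(2)[OF assms]) simp
  finally show ?thesis by simp
qed

lemma phi_len_le:
  assumes "(l, \<tau>) \<in> Dom" "(l', \<tau>') \<in> Dom" "Phi (l, \<tau>) = Phi (l', \<tau>')"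
  shows "length l' \<le> length l"
proof (rule ccontr)
  assume "\<not> length l' \<le> length l"
  then have "Suc (length l) \<le> length l'" by simp
  then have "(Phi (l', \<tau>') ^^ Suc (length l)) m = (m # l') ! Suc (length l)"
    by (rule phi_iter[OF assms(2)])
  also have "\<dots> = l' ! length l" by simp
  finally have "l' ! length l = m" using phi_ret[OF assms(1)] assms(3) by simp
  moreover have "l' ! length l \<in> S'" using assms(2) \<open>Suc (length l) \<le> length l'\<close>
    by (auto simp: Dom_def dest!: nth_mem[of "length l" l'])
  ultimately show False by (simp add: S'_def)
qed

lemma phi_inj: "inj_on Phi Dom"
proof (rule inj_onI)
  fix p q assume p: "p \<in> Dom" and q: "q \<in> Dom" and eq: "Phi p = Phi q"
  obtain l \<tau> where lt: "p = (l, \<tau>)" by (cases p)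
  obtain l' \<tau>' where lt': "q = (l', \<tau>')" by (cases q)
  have d1: "(l, \<tau>) \<in> Dom" and d2: "(l', \<tau>') \<in> Dom" using p q lt lt' by auto
  have e: "Phi (l, \<tau>) = Phi (l', \<tau>')" using eq lt lt' by simp
  have len: "length l = length l'"
    using phi_len_le[OF d1 d2 e] phi_len_le[OF d2 d1 e[symmetric]] by simp
  have ll: "l = l'"
  proof (rule nth_equalityI[OF len])
    fix i assume i: "i < length l"
    have "l ! i = (Phi (l, \<tau>) ^^ Suc i) m" using phi_iter[OF d1, of "Suc i"] i by simp
    also have "\<dots> = (Phi (l', \<tau>') ^^ Suc i) m" using e by simp
    also have "\<dots> = l' ! i" using phi_iter[OF d2, of "Suc i"] i len by simp
    finally show "l ! i = l' ! i" .
  qed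
  have tp: "\<tau> permutes (S' - set l)" "\<tau>' permutes (S' - set l)"
    using d1 d2 ll by (auto simp: Dom_def Der_def)
  have "\<tau> = \<tau>'"
  proof
    fix j show "\<tau> j = \<tau>' j"
    proof (cases "j \<in> S' - set l")
      case True
      then show ?thesis using phi_props(3)[OF d1 True] phi_props(3)[OF d2, of j] True ll e by simp
    next
      case False
      then show ?thesis using permutes_not_in[OF tp(1)] permutes_not_in[OF tp(2)] by simp
    qed
  qed
  then show "p = q" using lt lt' ll by simp
qed

lemma phi_surj: "Der S \<subseteq> Phi ` Dom"
proof
  fix \<sigma> assume sD: "\<sigma> \<in> Der S"
  then have sp: "\<sigma> permutes S" and nf: "\<forall>i\<in>S. \<sigma> i \<noteq> i" by (auto simp: Der_def)
  have perm: "permutation \<sigma>" using sp fS permutation_permutes by blast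
  define lp where "lp = least_power \<sigma> m"
  define sup where "sup = support \<sigma> m"
  have lp1: "lp > Suc 0" unfolding lp_def by (rule least_power_gt_one[OF perm]) (use nf mS in auto)
  define l where "l = map (\<lambda>i. (\<sigma> ^^ i) m) [Suc 0..<lp]"
  have supl: "sup = m # l" unfolding sup_def l_def lp_def[symmetric]
    using lp1 by (simp add: upt_conv_Cons)
  have dsup: "distinct sup" unfolding sup_def by (rule cycle_of_permutation[OF perm])
  have supS: "set sup \<subseteq> S"
  proof
    fix y assume "y \<in> set sup"
    then obtain i where "y = (\<sigma> ^^ i) m" by (auto simp: sup_def)
    then show "y \<in> S" using permutes_in_image[OF permutes_funpow[OF sp, of i]] mS by simp
  qed
  have lne: "l \<noteq> []" using lp1 by (simp add: l_def)
  have ldist: "distinct l" and mnl: "m \<notin> set l" using dsup supl by auto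
  have lS': "set l \<subseteq> S'" using supS supl mnl by (auto simp: S'_def)
  define \<tau> where "\<tau> = (\<lambda>y. if y \<in> (S - set sup) then \<sigma> y else y)"
  have tperm: "\<tau> permutes (S - set sup)" unfolding \<tau>_def sup_def by (rule semidecomposition[OF sp fS])
  have R: "S - set sup = S' - set l" using supl by (auto simp: S'_def)
  have tD: "\<tau> \<in> Der (S' - set l)" using tperm R nf by (auto simp: Der_def \<tau>_def)
  have dom: "(l, \<tau>) \<in> Dom" using lne ldist lS' tD by (simp add: Dom_def)
  have cr: "\<sigma> b = cycle_of_list sup b" if "b \<in> set sup" for b
  proof -
    have "b \<in> set (support \<sigma> m)" using that by (simp only: sup_def)
    from cycle_restrict[OF perm this] show ?thesis by (simp only: sup_def)
  qed
  have img: "\<sigma> ` set sup = set sup"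
  proof -
    have "\<sigma> ` set sup = cycle_of_list sup ` set sup" by (rule image_cong[OF refl]) (rule cr)
    also have "\<dots> = set sup" by (rule permutes_image[OF cycle_permutes])
    finally show ?thesis .
  qed
  have "Phi (l, \<tau>) = \<sigma>"
  proof
    fix j
    have P: "Phi (l, \<tau>) j = cycle_of_list sup (\<tau> j)" by (simp add: Phi_def supl)
    show "Phi (l, \<tau>) j = \<sigma> j"
    proof (cases "j \<in> set sup")
      case True
      then show ?thesis using P cr by (simp add: \<tau>_def)
    next
      case False
      show ?thesis
      proof (cases "j \<in> S")
        case True
        have "\<sigma> j \<notin> set sup"
        proof
          assume "\<sigma> j \<in> set sup"
          then obtain b where "b \<in> set sup" "\<sigma> j = \<sigma> b" using img by (metis imageE)
          then have "j = b" using permutes_inj[OF sp] by (simp add: inj_eq)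
          then show False using False \<open>b \<in> set sup\<close> by simp
        qed
        then show ?thesis using P True False by (simp add: \<tau>_def id_outside_supp)
      next
        case False
        then have "j \<notin> set sup" using supS by auto
        then show ?thesis using P False permutes_not_in[OF sp False] by (simp add: \<tau>_def id_outside_supp)
      qed
    qed
  qed
  then show "\<sigma> \<in> Phi ` Dom" using dom by (metis image_eqI)
qed

lemma phi_bij: "bij_betw Phi Dom (Der S)"
proof -
  have "Phi ` Dom \<subseteq> Der S"
  proof
    fix \<sigma> assume "\<sigma> \<in> Phi ` Dom"
    then obtain p where p: "p \<in> Dom" "\<sigma> = Phi p" by auto
    obtain l \<tau> where "p = (l, \<tau>)" by (cases p)
    then show "\<sigma> \<in> Der S" using phi_props(1)[of l \<tau>] p by simp
  qed
  then show ?thesis unfolding bij_betw_def using phi_inj phi_surj by blast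
qed

end


lemma der_decomp:
  assumes "finite S" "m \<in> S" "\<forall>z\<in>S. z \<le> m"
  shows "bij_betw (\<lambda>(l, \<tau>). cycle_of_list (m # l) \<circ> \<tau>)
           (Sigma {l. l \<noteq> [] \<and> distinct l \<and> set l \<subseteq> S - {m}} (\<lambda>l. Der (S - {m} - set l))) (Der S)"
    and "\<And>l \<tau>. (l, \<tau>) \<in> Sigma {l. l \<noteq> [] \<and> distinct l \<and> set l \<subseteq> S - {m}} (\<lambda>l. Der (S - {m} - set l)) \<Longrightarrow>
           excS S (cycle_of_list (m # l) \<circ> \<tau>) = Suc (ascL l + excS (S - {m} - set l) \<tau>)"
proof -
  interpret dsetup S m by unfold_locales (use assms in auto)
  show "bij_betw (\<lambda>(l, \<tau>). cycle_of_list (m # l) \<circ> \<tau>)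
           (Sigma {l. l \<noteq> [] \<and> distinct l \<and> set l \<subseteq> S - {m}} (\<lambda>l. Der (S - {m} - set l))) (Der S)"
    using phi_bij unfolding Phi_def Dom_def S'_def .
  fix l \<tau>
  assume "(l, \<tau>) \<in> Sigma {l. l \<noteq> [] \<and> distinct l \<and> set l \<subseteq> S - {m}} (\<lambda>l. Der (S - {m} - set l))"
  then have "(l, \<tau>) \<in> Dom" unfolding Dom_def S'_def .
  from phi_props(4)[OF this] show "excS S (cycle_of_list (m # l) \<circ> \<tau>) = Suc (ascL l + excS (S - {m} - set l) \<tau>)"
    unfolding Phi_def S'_def by simp
qed

lemma rev_bij: "bij_betw rev (lists_of U) (lists_of U)"
proof (rule bij_betw_imageI)
  show "inj_on rev (lists_of U)" by (simp add: inj_on_def)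
  show "rev ` lists_of U = lists_of U"
  proof
    show "rev ` lists_of U \<subseteq> lists_of U" by (auto simp: lists_of_def)
    show "lists_of U \<subseteq> rev ` lists_of U"
    proof
      fix l assume "l \<in> lists_of U"
      then have "rev l \<in> lists_of U" by (auto simp: lists_of_def)
      then show "l \<in> rev ` lists_of U" by (metis image_eqI rev_rev_ident)
    qed
  qed
qed

lemma AscP: "(\<Sum>l\<in>lists_of U. x ^ ascL l) = AP x U"
proof -
  have "(\<Sum>l\<in>lists_of U. x ^ ascL (rev l)) = (\<Sum>l\<in>lists_of U. x ^ ascL l)"
    by (rule sum.reindex_bij_betw[OF rev_bij])
  then show ?thesis by (simp add: AP_def ascL_rev)
qed

lemma DP_empty: "DP x {} = 1"
proof -
  have "Der {} = {id}" by (auto simp: Der_def)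
  then show ?thesis by (simp add: DP_def excS_def)
qed

lemma DP_formula:
  assumes "finite S" "x \<noteq> 1"
  shows "DP x S = fact (card S) * fps_nth (dstar x) (card S)"
  using assms(1)
proof (induction "card S" arbitrary: S rule: less_induct)
  case less
  show ?case
  proof (cases "S = {}")
    case True then show ?thesis using dstar0[OF assms(2)] by (simp add: DP_empty)
  next
    case False
    define m where "m = Max S"
    define S' where "S' = S - {m}"
    have mS: "m \<in> S" using False less.prems m_def by simp
    have mx: "\<forall>z\<in>S. z \<le> m" using less.prems m_def by simp
    have SS: "S = insert m S'" "m \<notin> S'" using mS S'_def by auto
    have fS': "finite S'" using less.prems S'_def by simp
    define n where "n = card S'"
    have cS: "card S = Suc n" using SS fS' n_def by simp
    define L1 where "L1 = {l. l \<noteq> [] \<and> distinct l \<and> set l \<subseteq> S'}"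
    define L where "L = {l. distinct l \<and> set l \<subseteq> S'}"
    have fL: "finite L" unfolding L_def using finite_subset_distinct[OF fS'] by (simp add: conj_commute)
    have fL1: "finite L1" by (rule finite_subset[OF _ fL]) (auto simp: L_def L1_def)
    define W where "W = (\<lambda>l::nat list. if l = [] then 0 else x * x ^ ascL l)"
    define ww where "ww = (\<lambda>U. if U = {} then 0 else x * AP x U)"
    define cf where "cf = fps_const x * (astar x - 1)"

    have dd1: "bij_betw (\<lambda>(l, \<tau>). cycle_of_list (m # l) \<circ> \<tau>) (Sigma L1 (\<lambda>l. Der (S' - set l))) (Der S)"
      using der_decomp(1)[OF less.prems mS mx] by (simp add: L1_def S'_def)
    have dd2: "excS S (cycle_of_list (m # l) \<circ> \<tau>) = Suc (ascL l + excS (S' - set l) \<tau>)"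
      if "(l, \<tau>) \<in> Sigma L1 (\<lambda>l. Der (S' - set l))" for l \<tau>
      using der_decomp(2)[OF less.prems mS mx, of l \<tau>] that by (simp add: L1_def S'_def)
    have "DP x S = (\<Sum>\<sigma>\<in>Der S. x ^ excS S \<sigma>)" by (simp add: DP_def)
    also have "\<dots> = (\<Sum>p\<in>Sigma L1 (\<lambda>l. Der (S' - set l)). x ^ excS S ((\<lambda>(l, \<tau>). cycle_of_list (m # l) \<circ> \<tau>) p))"
      by (rule sum.reindex_bij_betw[OF dd1, symmetric])
    also have "\<dots> = (\<Sum>(l, \<tau>)\<in>Sigma L1 (\<lambda>l. Der (S' - set l)). x * x ^ ascL l * x ^ excS (S' - set l) \<tau>)"
    proof (rule sum.cong[OF refl])
      fix p assume p: "p \<in> Sigma L1 (\<lambda>l. Der (S' - set l))"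
      obtain l \<tau> where lt: "p = (l, \<tau>)" by (cases p)
      show "x ^ excS S ((\<lambda>(l, \<tau>). cycle_of_list (m # l) \<circ> \<tau>) p) =
            (\<lambda>(l, \<tau>). x * x ^ ascL l * x ^ excS (S' - set l) \<tau>) p"
        using dd2[of l \<tau>] p lt by (simp add: power_add)
    qed
    also have "\<dots> = (\<Sum>l\<in>L1. \<Sum>\<tau>\<in>Der (S' - set l). x * x ^ ascL l * x ^ excS (S' - set l) \<tau>)"
      by (rule sum.Sigma[OF fL1, symmetric]) (use fS' in \<open>auto intro: finite_Der\<close>)
    also have "\<dots> = (\<Sum>l\<in>L1. x * x ^ ascL l * DP x (S' - set l))"
      by (simp add: DP_def sum_distrib_left)
    also have "\<dots> = (\<Sum>l\<in>L. W l * DP x (S' - set l))"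
    proof (rule sum.mono_neutral_cong_left[OF fL])
      show "L1 \<subseteq> L" by (auto simp: L_def L1_def)
      show "\<forall>i\<in>L - L1. W i * DP x (S' - set i) = 0" by (auto simp: L_def L1_def W_def)
      show "\<And>l. l \<in> L1 \<Longrightarrow> x * x ^ ascL l * DP x (S' - set l) = W l * DP x (S' - set l)"
        by (auto simp: L1_def W_def)
    qed
    also have "\<dots> = (\<Sum>U\<in>Pow S'. \<Sum>l\<in>lists_of U. W l * DP x (S' - set l))"
      unfolding L_def by (rule sum_group_lists[OF fS'])
    also have "\<dots> = (\<Sum>U\<in>Pow S'. ww U * DP x (S' - U))"
    proof (rule sum.cong[OF refl])
      fix U assume "U \<in> Pow S'"
      have "(\<Sum>l\<in>lists_of U. W l * DP x (S' - set l)) = (\<Sum>l\<in>lists_of U. W l) * DP x (S' - U)"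
        by (simp add: sum_distrib_right lists_of_def)
      also have "(\<Sum>l\<in>lists_of U. W l) = ww U"
      proof (cases "U = {}")
        case True then show ?thesis by (simp add: lists_of_empty W_def ww_def)
      next
        case False
        have "(\<Sum>l\<in>lists_of U. W l) = (\<Sum>l\<in>lists_of U. x * x ^ ascL l)"
          by (rule sum.cong) (use False in \<open>auto simp: W_def lists_of_def\<close>)
        also have "\<dots> = x * AP x U" by (simp add: sum_distrib_left[symmetric] AscP)
        finally show ?thesis using False by (simp add: ww_def)
      qed
      finally show "(\<Sum>l\<in>lists_of U. W l * DP x (S' - set l)) = ww U * DP x (S' - U)" .
    qed
    also have "\<dots> = (\<Sum>U\<in>Pow S'. (fact (card U) * fps_nth cf (card U)) *
          (fact (card (S' - U)) * fps_nth (dstar x) (card (S' - U))))"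
    proof (rule sum.cong[OF refl])
      fix U assume U: "U \<in> Pow S'"
      then have fU: "finite U" using fS' finite_subset by auto
      have "card U \<le> card S'" using U fS' by (simp add: card_mono)
      then have cU: "card U < card S" using cS n_def by simp
      have fR: "finite (S' - U)" using fS' by simp
      have "card (S' - U) \<le> card S'" using fS' by (simp add: card_mono)
      then have cR: "card (S' - U) < card S" using cS n_def by simp
      have "DP x (S' - U) = fact (card (S' - U)) * fps_nth (dstar x) (card (S' - U))"
        using less.hyps[OF cR fR] .
      moreover have "ww U = fact (card U) * fps_nth cf (card U)"
      proof (cases "U = {}")
        case True then show ?thesis unfolding True ww_def cf_def using astar0[OF assms(2)] by simp
      next
        case False
        then have "card U \<noteq> 0" using fU by simp
        then show ?thesis using False AP_formula[OF fU assms(2)] by (simp add: ww_def cf_def)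
      qed
      ultimately show "ww U * DP x (S' - U) = (fact (card U) * fps_nth cf (card U)) *
          (fact (card (S' - U)) * fps_nth (dstar x) (card (S' - U)))" by simp
    qed
    also have "\<dots> = (\<Sum>k=0..n. of_nat (n choose k) * (fact k * fps_nth cf k) *
          (fact (n - k) * fps_nth (dstar x) (n - k)))"
      unfolding n_def by (rule conv_pow[OF fS'])
    also have "\<dots> = fact n * (\<Sum>k=0..n. fps_nth cf k * fps_nth (dstar x) (n - k))"
      by (rule conv_fact)
    also have "\<dots> = fact n * fps_nth (cf * dstar x) n"
      by (simp only: fps_mult_nth)
    also have "\<dots> = fact n * fps_nth (fps_deriv (dstar x)) n"
      unfolding cf_def by (simp only: dstar_deriv[OF assms(2)])
    also have "\<dots> = fact n * (of_nat (n + 1) * fps_nth (dstar x) (n + 1))"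
      by (simp only: fps_deriv_nth)
    also have "\<dots> = fact (card S) * fps_nth (dstar x) (card S)"
      unfolding cS fact_Suc by simp
    finally show ?thesis .
  qed
qed

lemma derangement_DP: "derangement_poly n x = DP x {1..n}"
  by (simp add: derangement_poly_def DP_def Der_def excS_def exc_def)


lemma sorted_strict_distinct: "sorted_wrt (\<subset>) (xs :: 'a set list) \<Longrightarrow> distinct xs"
  by (induction xs) auto

lemma sorted_strict_last: "sorted_wrt (\<subset>) (Gs :: 'a set list) \<Longrightarrow> Gs \<noteq> [] \<Longrightarrow> G \<in> set Gs \<Longrightarrow> G \<subseteq> last Gs"
proof -
  assume s: "sorted_wrt (\<subset>) Gs" and ne: "Gs \<noteq> []" and G: "G \<in> set Gs"
  have eq: "Gs = butlast Gs @ [last Gs]" using ne by simp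
  then have "sorted_wrt (\<subset>) (butlast Gs @ [last Gs])" using s by metis
  then have "\<forall>y\<in>set (butlast Gs). y \<subset> last Gs" by (simp add: sorted_wrt_append)
  moreover have "G \<in> set (butlast Gs) \<or> G = last Gs" using G eq
    by (metis Un_iff empty_iff empty_set set_ConsD set_append)
  ultimately show ?thesis by auto
qed

lemma finite_chains: "finite E \<Longrightarrow> finite (chains_to E)"
proof -
  assume fE: "finite E"
  have "chains_to E \<subseteq> {xs. set xs \<subseteq> Pow E \<and> distinct xs}"
  proof
    fix Fs assume "Fs \<in> chains_to E"
    then have "Fs \<noteq> []" "sorted_wrt (\<subset>) Fs" "last Fs = E" by (auto simp: chains_to_def)
    then show "Fs \<in> {xs. set xs \<subseteq> Pow E \<and> distinct xs}"
      using sorted_strict_last sorted_strict_distinct by fastforce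
  qed
  moreover have "finite {xs. set xs \<subseteq> Pow E \<and> distinct xs}"
    using finite_subset_distinct[of "Pow E"] fE by simp
  ultimately show ?thesis by (rule finite_subset)
qed

lemma chain_snoc:
  "Gs \<noteq> [] \<Longrightarrow> (Gs @ [E] \<in> chains_to E) \<longleftrightarrow> (Gs \<in> chains_to (last Gs) \<and> last Gs \<subset> E)"
proof -
  assume ne: "Gs \<noteq> []"
  have "sorted_wrt (\<subset>) (Gs @ [E]) \<longleftrightarrow> sorted_wrt (\<subset>) Gs \<and> (\<forall>G\<in>set Gs. G \<subset> E)"
    by (simp add: sorted_wrt_append)
  moreover have "(\<forall>G\<in>set Gs. G \<subset> E) \<longleftrightarrow> last Gs \<subset> E" if s: "sorted_wrt (\<subset>) Gs"
  proof
    assume "\<forall>G\<in>set Gs. G \<subset> E"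
    then show "last Gs \<subset> E" using ne by simp
  next
    assume l: "last Gs \<subset> E"
    show "\<forall>G\<in>set Gs. G \<subset> E"
    proof
      fix G assume "G \<in> set Gs"
      then have "G \<subseteq> last Gs" using sorted_strict_last[OF s ne] by simp
      then show "G \<subset> E" using l by (rule subset_psubset_trans)
    qed
  qed
  ultimately show ?thesis using ne by (auto simp: chains_to_def)
qed

lemma chains_split:
  assumes fE: "finite E"
  shows "(\<Sum>Fs\<in>{Fs \<in> chains_to E. P (hd Fs)}. h Fs) =
         (if P E then h [E] else 0) +
         (\<Sum>G\<in>{G. G \<subset> E}. \<Sum>Gs\<in>{Gs \<in> chains_to G. P (hd Gs)}. h (Gs @ [E]))"
proof -
  define A1 where "A1 = {Fs \<in> chains_to E. P (hd Fs) \<and> length Fs = 1}"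
  define A2 where "A2 = {Fs \<in> chains_to E. P (hd Fs) \<and> length Fs \<noteq> 1}"
  have fin: "finite {Fs \<in> chains_to E. P (hd Fs)}" using finite_chains[OF fE] by simp
  have split: "{Fs \<in> chains_to E. P (hd Fs)} = A1 \<union> A2" by (auto simp: A1_def A2_def)
  have "(\<Sum>Fs\<in>{Fs \<in> chains_to E. P (hd Fs)}. h Fs) = (\<Sum>Fs\<in>A1. h Fs) + (\<Sum>Fs\<in>A2. h Fs)"
    unfolding split by (rule sum.union_disjoint) (use fin split in \<open>auto simp: A1_def A2_def\<close>)
  moreover have "A1 = (if P E then {[E]} else {})"
  proof -
    have "Fs \<in> A1 \<longleftrightarrow> Fs = [E] \<and> P E" for Fs
    proof
      assume "Fs \<in> A1"
      then have "length Fs = 1" "last Fs = E" "P (hd Fs)" by (auto simp: A1_def chains_to_def)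
      then show "Fs = [E] \<and> P E" by (cases Fs) auto
    qed (auto simp: A1_def chains_to_def)
    then show ?thesis by auto
  qed
  moreover have "(\<Sum>Fs\<in>A2. h Fs) = (\<Sum>G\<in>{G. G \<subset> E}. \<Sum>Gs\<in>{Gs \<in> chains_to G. P (hd Gs)}. h (Gs @ [E]))"
  proof -
    have fP: "finite {G. G \<subset> E}" by (rule finite_subset[of _ "Pow E"]) (use fE in auto)
    have bij: "bij_betw (\<lambda>(G, Gs). Gs @ [E]) (Sigma {G. G \<subset> E} (\<lambda>G. {Gs \<in> chains_to G. P (hd Gs)})) A2"
    proof (rule bij_betw_imageI)
      show "inj_on (\<lambda>(G, Gs). Gs @ [E]) (Sigma {G. G \<subset> E} (\<lambda>G. {Gs \<in> chains_to G. P (hd Gs)}))"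
        by (auto simp: inj_on_def chains_to_def)
      show "(\<lambda>(G, Gs). Gs @ [E]) ` (Sigma {G. G \<subset> E} (\<lambda>G. {Gs \<in> chains_to G. P (hd Gs)})) = A2"
      proof
        show "(\<lambda>(G, Gs). Gs @ [E]) ` (Sigma {G. G \<subset> E} (\<lambda>G. {Gs \<in> chains_to G. P (hd Gs)})) \<subseteq> A2"
        proof
          fix Fs assume "Fs \<in> (\<lambda>(G, Gs). Gs @ [E]) ` (Sigma {G. G \<subset> E} (\<lambda>G. {Gs \<in> chains_to G. P (hd Gs)}))"
          then obtain G Gs where g: "G \<subset> E" "Gs \<in> chains_to G" "P (hd Gs)" "Fs = Gs @ [E]" by auto
          then have ne: "Gs \<noteq> []" "last Gs = G" by (auto simp: chains_to_def)
          then have "Gs @ [E] \<in> chains_to E" using chain_snoc[OF ne(1)] g by simp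
          then show "Fs \<in> A2" using g ne by (auto simp: A2_def)
        qed
        show "A2 \<subseteq> (\<lambda>(G, Gs). Gs @ [E]) ` (Sigma {G. G \<subset> E} (\<lambda>G. {Gs \<in> chains_to G. P (hd Gs)}))"
        proof
          fix Fs assume F: "Fs \<in> A2"
          then have F1: "Fs \<noteq> []" "length Fs \<noteq> 1" "last Fs = E" "P (hd Fs)" "Fs \<in> chains_to E"
            by (auto simp: A2_def chains_to_def)
          define Gs where "Gs = butlast Fs"
          have ne: "Gs \<noteq> []" using F1 by (cases Fs rule: rev_cases) (auto simp: Gs_def)
          have FG: "Fs = Gs @ [E]" using F1 unfolding Gs_def by (metis append_butlast_last_id)
          have "Gs \<in> chains_to (last Gs) \<and> last Gs \<subset> E" using chain_snoc[OF ne] F1 FG by simp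
          moreover have "P (hd Gs)" using F1 FG ne by simp
          ultimately have "(last Gs, Gs) \<in> Sigma {G. G \<subset> E} (\<lambda>G. {Gs \<in> chains_to G. P (hd Gs)})" by simp
          then show "Fs \<in> (\<lambda>(G, Gs). Gs @ [E]) ` (Sigma {G. G \<subset> E} (\<lambda>G. {Gs \<in> chains_to G. P (hd Gs)}))"
            using FG by (metis (no_types, lifting) case_prod_conv image_eqI)
        qed
      qed
    qed
    have "(\<Sum>Fs\<in>A2. h Fs) = (\<Sum>p\<in>Sigma {G. G \<subset> E} (\<lambda>G. {Gs \<in> chains_to G. P (hd Gs)}). h ((\<lambda>(G, Gs). Gs @ [E]) p))"
      by (rule sum.reindex_bij_betw[OF bij, symmetric])
    also have "\<dots> = (\<Sum>(G, Gs)\<in>Sigma {G. G \<subset> E} (\<lambda>G. {Gs \<in> chains_to G. P (hd Gs)}). h (Gs @ [E]))"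
      by (rule sum.cong) auto
    also have "\<dots> = (\<Sum>G\<in>{G. G \<subset> E}. \<Sum>Gs\<in>{Gs \<in> chains_to G. P (hd Gs)}. h (Gs @ [E]))"
    proof (rule sum.Sigma[OF fP, symmetric])
      show "\<forall>G\<in>{G. G \<subset> E}. finite {Gs \<in> chains_to G. P (hd Gs)}"
      proof
        fix G assume "G \<in> {G. G \<subset> E}"
        then have fG: "finite G" using fE finite_subset by auto
        have "{Gs \<in> chains_to G. P (hd Gs)} \<subseteq> chains_to G" by auto
        then show "finite {Gs \<in> chains_to G. P (hd Gs)}"
          using finite_chains[OF fG] by (rule finite_subset)
      qed
    qed
    finally show ?thesis .
  qed
  ultimately show ?thesis by simp
qed

lemma chain_weight_snoc:
  assumes "Gs \<noteq> []"
  shows "chain_weight x (Gs @ [E]) = chain_weight x Gs * fw x (card E - card (last Gs))"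
proof -
  let ?t = "\<lambda>Fs i. x * (1 - x ^ (card (Fs ! i) - card (Fs ! (i - 1)) - 1)) / (1 - x)"
  have len: "length (Gs @ [E]) - 1 = length Gs" by simp
  have ins: "{1..length Gs} = insert (length Gs) {1..length Gs - 1}" using assms by (cases Gs) auto
  have "chain_weight x (Gs @ [E]) = (\<Prod>i\<in>insert (length Gs) {1..length Gs - 1}. ?t (Gs @ [E]) i)"
    unfolding chain_weight_def len ins ..
  also have "\<dots> = ?t (Gs @ [E]) (length Gs) * (\<Prod>i\<in>{1..length Gs - 1}. ?t (Gs @ [E]) i)"
    by (rule prod.insert) auto
  also have "(\<Prod>i\<in>{1..length Gs - 1}. ?t (Gs @ [E]) i) = chain_weight x Gs"
    unfolding chain_weight_def
  proof (rule prod.cong[OF refl])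
    fix i assume "i \<in> {1..length Gs - 1}"
    then have "i < length Gs" "i - 1 < length Gs" using assms by auto
    then show "?t (Gs @ [E]) i = ?t Gs i" by (simp add: nth_append)
  qed
  also have "?t (Gs @ [E]) (length Gs) = fw x (card E - card (last Gs))"
  proof -
    have l1: "length Gs - 1 < length Gs" using assms by simp
    have "(Gs @ [E]) ! (length Gs - 1) = last Gs"
      using l1 assms by (simp add: nth_append last_conv_nth)
    then show ?thesis by (simp add: fw_def)
  qed
  finally show ?thesis by simp
qed

lemma sum_psubset_conv:
  assumes fE: "finite E" and F0: "Fw 0 = 0"
  shows "(\<Sum>G\<in>{G. G \<subset> E}. H (card G) * Fw (card E - card G)) =
         (\<Sum>k=0..card E. of_nat (card E choose k) * H k * (Fw (card E - k) :: real))"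
proof -
  have "(\<Sum>G\<in>{G. G \<subset> E}. H (card G) * Fw (card E - card G)) = (\<Sum>G\<in>Pow E. H (card G) * Fw (card (E - G)))"
  proof (rule sum.mono_neutral_cong_left)
    show "finite (Pow E)" using fE by simp
    show "{G. G \<subset> E} \<subseteq> Pow E" by auto
    show "\<forall>i\<in>Pow E - {G. G \<subset> E}. H (card i) * Fw (card (E - i)) = 0" using F0 by auto
    show "\<And>G. G \<in> {G. G \<subset> E} \<Longrightarrow> H (card G) * Fw (card E - card G) = H (card G) * Fw (card (E - G))"
      using fE by (auto simp: card_Diff_subset finite_subset)
  qed
  also have "\<dots> = (\<Sum>k=0..card E. of_nat (card E choose k) * H k * Fw (card E - k))"
    by (rule conv_pow[OF fE])
  finally show ?thesis .
qed

lemma fw0: "fw x 0 = 0" by (simp add: fw_def)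

lemma Fps_nth: "fw x k = fact k * fps_nth (Fps x) k"
  by (cases k) (auto simp: Fps_def fw_def)

lemma CS_formula:
  assumes "finite E" "x \<noteq> 1"
  shows "(\<Sum>Fs\<in>{Fs \<in> chains_to E. hd Fs = {}}. chain_weight x Fs) = fact (card E) * fps_nth (dstar x) (card E)"
  using assms(1)
proof (induction "card E" arbitrary: E rule: less_induct)
  case less
  let ?n = "card E"
  have "(\<Sum>Fs\<in>{Fs \<in> chains_to E. hd Fs = {}}. chain_weight x Fs) =
        (if E = {} then chain_weight x [E] else 0) +
        (\<Sum>G\<in>{G. G \<subset> E}. \<Sum>Gs\<in>{Gs \<in> chains_to G. hd Gs = {}}. chain_weight x (Gs @ [E]))"
    by (rule chains_split[OF less.prems])
  also have "(\<Sum>G\<in>{G. G \<subset> E}. \<Sum>Gs\<in>{Gs \<in> chains_to G. hd Gs = {}}. chain_weight x (Gs @ [E])) =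
             (\<Sum>G\<in>{G. G \<subset> E}. (fact (card G) * fps_nth (dstar x) (card G)) * fw x (card E - card G))"
  proof (rule sum.cong[OF refl])
    fix G assume G: "G \<in> {G. G \<subset> E}"
    have fG: "finite G" using G less.prems finite_subset by auto
    have cG: "card G < card E" using G less.prems by (simp add: psubset_card_mono)
    have "(\<Sum>Gs\<in>{Gs \<in> chains_to G. hd Gs = {}}. chain_weight x (Gs @ [E])) =
          (\<Sum>Gs\<in>{Gs \<in> chains_to G. hd Gs = {}}. chain_weight x Gs * fw x (card E - card G))"
      by (rule sum.cong[OF refl]) (auto simp: chains_to_def chain_weight_snoc)
    also have "\<dots> = (\<Sum>Gs\<in>{Gs \<in> chains_to G. hd Gs = {}}. chain_weight x Gs) * fw x (card E - card G)"
      by (simp add: sum_distrib_right)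
    also have "\<dots> = (fact (card G) * fps_nth (dstar x) (card G)) * fw x (card E - card G)"
      using less.hyps[OF cG fG] by simp
    finally show "(\<Sum>Gs\<in>{Gs \<in> chains_to G. hd Gs = {}}. chain_weight x (Gs @ [E])) =
          (fact (card G) * fps_nth (dstar x) (card G)) * fw x (card E - card G)" .
  qed
  also have "(\<Sum>G\<in>{G. G \<subset> E}. (fact (card G) * fps_nth (dstar x) (card G)) * fw x (card E - card G)) =
             (\<Sum>k=0..?n. of_nat (?n choose k) * (fact k * fps_nth (dstar x) k) * fw x (?n - k))"
    by (rule sum_psubset_conv[OF less.prems]) (rule fw0)
  also have "\<dots> = (\<Sum>k=0..?n. of_nat (?n choose k) * (fact k * fps_nth (dstar x) k) * (fact (?n - k) * fps_nth (Fps x) (?n - k)))"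
    by (simp only: Fps_nth)
  also have "\<dots> = fact ?n * fps_nth (dstar x * Fps x) ?n"
    by (simp only: conv_fact fps_mult_nth)
  also have "(if E = {} then chain_weight x [E] else 0) = fact ?n * fps_nth 1 ?n"
    using less.prems by (simp add: chain_weight_def)
  also have "fact ?n * fps_nth 1 ?n + fact ?n * fps_nth (dstar x * Fps x) ?n = fact ?n * fps_nth (1 + dstar x * Fps x) ?n"
    by (simp add: algebra_simps)
  also have "1 + dstar x * Fps x = dstar x" using dstar_rec[OF assms(2)] by simp
  finally show ?case .
qed

lemma Gps_nth: "gw x k = fact k * fps_nth (Gps x) k"
  by (simp add: Gps_def)

lemma TS_formula:
  assumes "finite E" "x \<noteq> 1"
  shows "(\<Sum>Fs\<in>chains_to E. gw x (card (hd Fs)) * chain_weight x Fs) = fact (card E) * fps_nth (tstar x) (card E)"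
  using assms(1)
proof (induction "card E" arbitrary: E rule: less_induct)
  case less
  let ?n = "card E"
  have "(\<Sum>Fs\<in>chains_to E. gw x (card (hd Fs)) * chain_weight x Fs) =
        (\<Sum>Fs\<in>{Fs \<in> chains_to E. True}. gw x (card (hd Fs)) * chain_weight x Fs)" by simp
  also have "\<dots> = (if True then gw x (card (hd [E])) * chain_weight x [E] else 0) +
        (\<Sum>G\<in>{G. G \<subset> E}. \<Sum>Gs\<in>{Gs \<in> chains_to G. True}. gw x (card (hd (Gs @ [E]))) * chain_weight x (Gs @ [E]))"
    by (rule chains_split[OF less.prems])
  also have "(\<Sum>G\<in>{G. G \<subset> E}. \<Sum>Gs\<in>{Gs \<in> chains_to G. True}. gw x (card (hd (Gs @ [E]))) * chain_weight x (Gs @ [E])) =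
             (\<Sum>G\<in>{G. G \<subset> E}. (fact (card G) * fps_nth (tstar x) (card G)) * fw x (card E - card G))"
  proof (rule sum.cong[OF refl])
    fix G assume G: "G \<in> {G. G \<subset> E}"
    have fG: "finite G" using G less.prems finite_subset by auto
    have cG: "card G < card E" using G less.prems by (simp add: psubset_card_mono)
    have "(\<Sum>Gs\<in>{Gs \<in> chains_to G. True}. gw x (card (hd (Gs @ [E]))) * chain_weight x (Gs @ [E])) =
          (\<Sum>Gs\<in>chains_to G. gw x (card (hd Gs)) * chain_weight x Gs * fw x (card E - card G))"
      by (rule sum.cong) (auto simp: chains_to_def chain_weight_snoc)
    also have "\<dots> = (\<Sum>Gs\<in>chains_to G. gw x (card (hd Gs)) * chain_weight x Gs) * fw x (card E - card G)"
      by (simp add: sum_distrib_right)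
    also have "\<dots> = (fact (card G) * fps_nth (tstar x) (card G)) * fw x (card E - card G)"
      using less.hyps[OF cG fG] by simp
    finally show "(\<Sum>Gs\<in>{Gs \<in> chains_to G. True}. gw x (card (hd (Gs @ [E]))) * chain_weight x (Gs @ [E])) =
          (fact (card G) * fps_nth (tstar x) (card G)) * fw x (card E - card G)" .
  qed
  also have "(\<Sum>G\<in>{G. G \<subset> E}. (fact (card G) * fps_nth (tstar x) (card G)) * fw x (card E - card G)) =
             (\<Sum>k=0..?n. of_nat (?n choose k) * (fact k * fps_nth (tstar x) k) * fw x (?n - k))"
    by (rule sum_psubset_conv[OF less.prems]) (rule fw0)
  also have "\<dots> = (\<Sum>k=0..?n. of_nat (?n choose k) * (fact k * fps_nth (tstar x) k) * (fact (?n - k) * fps_nth (Fps x) (?n - k)))"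
    by (simp only: Fps_nth)
  also have "\<dots> = fact ?n * fps_nth (tstar x * Fps x) ?n"
    by (simp only: conv_fact fps_mult_nth)
  also have "(if True then gw x (card (hd [E])) * chain_weight x [E] else 0) = fact ?n * fps_nth (Gps x) ?n"
    by (simp add: chain_weight_def Gps_nth)
  also have "fact ?n * fps_nth (Gps x) ?n + fact ?n * fps_nth (tstar x * Fps x) ?n = fact ?n * fps_nth (Gps x + tstar x * Fps x) ?n"
    by (simp add: algebra_simps)
  also have "Gps x + tstar x * Fps x = tstar x" using tstar_rec[OF assms(2)] by simp
  finally show ?case .
qed

theorem lemma3p20:
  fixes E :: "'a set" and n :: nat and x :: real
  assumes "finite E" and "card E = n" and "n \<ge> 1" and "x \<noteq> 1"
  shows "(derangement_poly n x =
           (\<Sum>Fs \<in> {Fs \<in> chains_to E. length Fs \<ge> 2 \<and> hd Fs = {}}. chain_weight x Fs)) \<and>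
         (x * eulerian_poly n x =
           (\<Sum>Fs \<in> chains_to E.
              x * (1 - x ^ card (hd Fs)) / (1 - x) * chain_weight x Fs))"
proof
  have Ene: "E \<noteq> {}" using assms by auto
  have "{Fs \<in> chains_to E. length Fs \<ge> 2 \<and> hd Fs = {}} = {Fs \<in> chains_to E. hd Fs = {}}"
  proof (rule Collect_cong)
    fix Fs
    show "(Fs \<in> chains_to E \<and> length Fs \<ge> 2 \<and> hd Fs = {}) = (Fs \<in> chains_to E \<and> hd Fs = {})"
    proof
      assume h: "Fs \<in> chains_to E \<and> hd Fs = {}"
      then have "Fs \<noteq> []" "last Fs = E" by (auto simp: chains_to_def)
      moreover have "length Fs \<noteq> 1"
      proof
        assume "length Fs = 1"
        then obtain F where "Fs = [F]" by (cases Fs) auto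
        then show False using h Ene by (auto simp: chains_to_def)
      qed
      ultimately have "2 \<le> length Fs" by (cases "length Fs") auto
      then show "Fs \<in> chains_to E \<and> length Fs \<ge> 2 \<and> hd Fs = {}" using h by simp
    qed auto
  qed
  moreover have "derangement_poly n x = fact n * fps_nth (dstar x) n"
    using DP_formula[of "{1..n}" x] assms(4) by (simp add: derangement_DP)
  ultimately show "derangement_poly n x =
           (\<Sum>Fs \<in> {Fs \<in> chains_to E. length Fs \<ge> 2 \<and> hd Fs = {}}. chain_weight x Fs)"
    using CS_formula[OF assms(1,4)] assms(2) by simp
next
  have "(\<Sum>Fs \<in> chains_to E. x * (1 - x ^ card (hd Fs)) / (1 - x) * chain_weight x Fs) =
        fact n * fps_nth (tstar x) n"
    using TS_formula[OF assms(1,4)] assms(2) by (simp add: gw_def)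
  also have "fps_nth (tstar x) n = x * fps_nth (astar x) n"
    using assms(3) by (simp add: tstar_astar[OF assms(4)])
  also have "fact n * (x * fps_nth (astar x) n) = x * eulerian_poly n x"
    using AP_formula[of "{1..n}" x] assms(4) by (simp add: eulerian_AP)
  finally show "x * eulerian_poly n x =
           (\<Sum>Fs \<in> chains_to E. x * (1 - x ^ card (hd Fs)) / (1 - x) * chain_weight x Fs)" by simp
qed

end
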